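(* Let $X$ be a set, $r\in\{0,1\}$, $m,m'$ finite multisets with $(m',(r,m))\in\partial_X$, and let $m_1,\dots,m_k\in\mathcal M_{\mathrm{fin}}(X)$ with $m=m_1+\cdots+m_k$. Then there exist $r_1,\dots,r_k\in\{0,1\}$ and $m'_1,\dots,m'_k\in\mathcal M_{\mathrm{fin}}(\{0,1\}\times X)$ such that $r=r_1+\cdots+r_k$, $m'=m'_1+\cdots+m'_k$ and $(m'_i,(r_i,m_i))\in\partial_X$ for $i=1,\dots,k$.
   Context: $\mathcal M_{\mathrm{fin}}(A)$ denotes the set of finite multisets over a set $A$, with additive notation ($+$ is pointwise sum), and $[a_1,\dots,a_k]$ denotes the multiset with these elements counted with multiplicity. For a set $X$, $\partial_X\subseteq\mathcal M_{\mathrm{fin}}(\{0,1\}\times X)\times(\{0,1\}\times\mathcal M_{\mathrm{fin}}(X))$ (the differential of the relational model) is the set of all pairs $(m',(r,m))$ such that there exist $k\in\mathbb N$, $a_1,\dots,a_k\in X$ and $r_1,\dots,r_k\in\{0,1\}$ with $m=[a_1,\dots,a_k]$, $m'=[(r_1,a_1),\dots,(r_k,a_k)]$ and $r=r_1+\cdots+r_k\in\{0,1\}$ (ordinary integer sum, required to be $0$ or $1$). *)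

theory Defs
  imports Main "HOL-Library.Multiset"
begin

definition diffrel :: "'a set \<Rightarrow> ((nat \<times> 'a) multiset \<times> (nat \<times> 'a multiset)) set" where
  "diffrel X = {(m', (r, m)) | m' r m. \<exists>k (a :: nat \<Rightarrow> 'a) (rs :: nat \<Rightarrow> nat).
       (\<forall>i<k. a i \<in> X) \<and> (\<forall>i<k. rs i \<in> {0, 1}) \<and>
       m = (\<Sum>i<k. {# a i #}) \<and> m' = (\<Sum>i<k. {# (rs i, a i) #}) \<and>
       r = (\<Sum>i<k. rs i) \<and> r \<in> {0, 1}}"

end

theory Submission
  imports Defs
begin

lemma split_img:
  fixes k :: nat shows "image_mset f M = (\<Sum>i<k. ms i) \<Longrightarrow>
   \<exists>ms'. M = (\<Sum>i<k. ms' i) \<and> (\<forall>i<k. image_mset f (ms' i) = ms i)"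
proof (induction k arbitrary: M)
  case 0
  then show ?case by simp
next
  case (Suc k)
  then have "image_mset f M = (\<Sum>i<k. ms i) + ms k" by simp
  then obtain B C where BC: "M = B + C" "(\<Sum>i<k. ms i) = image_mset f B" "ms k = image_mset f C"
    using image_mset_eq_plusD by blast
  from Suc.IH[of B] BC obtain ms' where ms': "B = (\<Sum>i<k. ms' i)" "\<forall>i<k. image_mset f (ms' i) = ms i"
    by auto
  have "(\<Sum>i<k. (ms'(k:=C)) i) = (\<Sum>i<k. ms' i)" by (rule sum.cong) auto
  then show ?case using BC ms'
    by (intro exI[of _ "ms'(k:=C)"]) (auto simp: less_Suc_eq)
qed

lemma sub_sum: fixes k :: nat shows "i < k \<Longrightarrow> f i \<subseteq># (\<Sum>i<k. f i)"
proof (induction k)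
  case 0 then show ?case by simp
next
  case (Suc k)
  then show ?case
    by (auto simp: less_Suc_eq intro: subset_mset.order_trans[OF _ mset_subset_eq_add_left])
qed

lemma img_sum: fixes k :: nat shows "image_mset g (\<Sum>i<k. f i) = (\<Sum>i<k. image_mset g (f i))"
  by (induction k) auto

lemma summ_sum: fixes k :: nat shows "sum_mset (\<Sum>i<k. f i) = (\<Sum>i<k. sum_mset (f i))"
  by (induction k) auto

lemma list_sum: "(\<Sum>i<length xs. h (xs!i)) = sum_mset (image_mset h (mset xs))"
proof (induction xs)
  case Nil then show ?case by simp
next
  case (Cons x xs)
  then show ?case by (simp del: sum.lessThan_Suc add: sum.lessThan_Suc_shift)
qed

lemma img_as_sum: "image_mset f M = sum_mset (image_mset (\<lambda>x. {#f x#}) M)"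
  by (induction M) auto

lemma diff_fwd:
  assumes "(m', (r, m)) \<in> diffrel X"
  shows "image_mset snd m' = m \<and> sum_mset (image_mset fst m') = r"
proof -
  from assms obtain k and a :: "nat \<Rightarrow> 'a" and rs :: "nat \<Rightarrow> nat" where h: "m = (\<Sum>i<k. {# a i #})" "m' = (\<Sum>i<k. {# (rs i, a i) #})"
    "r = (\<Sum>i<k. rs i)" unfolding diffrel_def by blast
  have "image_mset snd m' = m" unfolding h by (simp add: img_sum)
  moreover have "sum_mset (image_mset fst m') = r" unfolding h by (simp add: img_sum summ_sum)
  ultimately show ?thesis by blast
qed

lemma diffrel_I:
  fixes k :: nat and a :: "nat \<Rightarrow> 'a" and rs :: "nat \<Rightarrow> nat"
  assumes "\<forall>i<k. a i \<in> X" "\<forall>i<k. rs i \<in> {0, 1}"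
    "m = (\<Sum>i<k. {# a i #})" "m' = (\<Sum>i<k. {# (rs i, a i) #})"
    "r = (\<Sum>i<k. rs i)" "r \<in> {0, 1}"
  shows "(m', (r, m)) \<in> diffrel X"
  unfolding diffrel_def
  apply (rule CollectI)
  apply (rule exI[of _ m'], rule exI[of _ r], rule exI[of _ m])
  apply (rule conjI[OF refl])
  apply (rule exI[of _ k], rule exI[of _ a], rule exI[of _ rs])
  using assms by (intro conjI)

lemma diff_bwd:
  assumes "set_mset M \<subseteq> {0, 1} \<times> X" and "sum_mset (image_mset fst M) \<in> {0, 1}"
  shows "(M, (sum_mset (image_mset fst M), image_mset snd M)) \<in> diffrel X"
proof -
  obtain xs where xs: "mset xs = M" using ex_mset by blast
  have s: "xs ! i \<in> {0, 1} \<times> X" if "i < length xs" for i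
    using xs that assms(1) nth_mem by (metis set_mset_mset subsetD)
  have e1: "image_mset snd M = (\<Sum>i<length xs. {# snd (xs!i) #})"
    unfolding img_as_sum[of snd M] list_sum[of "\<lambda>x. {#snd x#}" xs] xs ..
  have e2: "M = (\<Sum>i<length xs. {# (fst (xs!i), snd (xs!i)) #})"
  proof -
    have "M = image_mset (\<lambda>x. x) M" by simp
    also have "\<dots> = (\<Sum>i<length xs. {# xs!i #})"
      unfolding img_as_sum[of "\<lambda>x. x" M] list_sum[of "\<lambda>x. {#x#}" xs] xs ..
    finally show ?thesis by simp
  qed
  have e3: "sum_mset (image_mset fst M) = (\<Sum>i<length xs. fst (xs!i))"
    unfolding list_sum[of fst xs] xs ..
  show ?thesis
  proof (rule diffrel_I[OF _ _ e1 e2 e3 assms(2)])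
    show "\<forall>i<length xs. snd (xs ! i) \<in> X" using s by (simp add: mem_Times_iff)
    show "\<forall>i<length xs. fst (xs ! i) \<in> {0, 1}" using s by (simp add: mem_Times_iff)
  qed
qed

theorem mainTheorem16:
  fixes X :: "'a set" and r :: nat and m :: "'a multiset" and m' :: "(nat \<times> 'a) multiset"
    and k :: nat and ms :: "nat \<Rightarrow> 'a multiset"
  assumes "r \<in> {0, 1}"
    and "set_mset m \<subseteq> X" and "set_mset m' \<subseteq> {0, 1} \<times> X"
    and "(m', (r, m)) \<in> diffrel X"
    and "\<forall>i<k. set_mset (ms i) \<subseteq> X"
    and "m = (\<Sum>i<k. ms i)"
  shows "\<exists>(rs :: nat \<Rightarrow> nat) (ms' :: nat \<Rightarrow> (nat \<times> 'a) multiset).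
           (\<forall>i<k. rs i \<in> {0, 1}) \<and> (\<forall>i<k. set_mset (ms' i) \<subseteq> {0, 1} \<times> X) \<and>
           r = (\<Sum>i<k. rs i) \<and> m' = (\<Sum>i<k. ms' i) \<and>
           (\<forall>i<k. (ms' i, (rs i, ms i)) \<in> diffrel X)"
proof -
  from diff_fwd[OF assms(4)] have f: "image_mset snd m' = m" "sum_mset (image_mset fst m') = r" by auto
  from split_img[where f=snd and M=m' and k=k and ms=ms] f assms(6) obtain ms' where
    ms': "m' = (\<Sum>i<k. ms' i)" "\<forall>i<k. image_mset snd (ms' i) = ms i" by auto
  define rs where "rs i = sum_mset (image_mset fst (ms' i))" for i
  have rsum: "r = (\<Sum>i<k. rs i)" using f(2) unfolding ms' rs_def by (simp add: img_sum summ_sum)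
  have rle: "rs i \<le> r" if "i < k" for i
    unfolding rsum using that by (intro member_le_sum) auto
  have rs01: "\<forall>i<k. rs i \<in> {0, 1}" using rle assms(1) by fastforce
  have sets: "\<forall>i<k. set_mset (ms' i) \<subseteq> {0, 1} \<times> X"
    using assms(3) ms'(1) sub_sum[of _ k ms'] by (meson set_mset_mono subset_trans)
  have "\<forall>i<k. (ms' i, (rs i, ms i)) \<in> diffrel X"
  proof (intro allI impI)
    fix i assume "i < k"
    then have "(ms' i, (sum_mset (image_mset fst (ms' i)), image_mset snd (ms' i))) \<in> diffrel X"
      using sets rs01 unfolding rs_def by (intro diff_bwd) auto
    then show "(ms' i, (rs i, ms i)) \<in> diffrel X" using ms'(2) \<open>i < k\<close> unfolding rs_def by simp
  qed
  then show ?thesis using rs01 sets rsum ms'(1) by blast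
qed

end
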